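(* Let $(X,\le)$ be a partially ordered set, and for $x\in X$ let $K_x=\{y\in X: y\le x\}$. Let $\tau_\le$ be the topology on $X$ generated by the sets $K_x$ and $X\setminus K_x$, $x\in X$. The following are equivalent: (i) $(X,\tau_\le)$ is compact; (ii) $(X,\le)$ satisfies the descending chain condition (every decreasing sequence $x_1\ge x_2\ge\dots$ is eventually constant), there is a finite $F\subset X$ with $X=\bigcup_{x\in F}K_x$, and for any $x,y\in X$ there is a finite $F(x,y)\subset X$ with $K_x\cap K_y=\bigcup_{z\in F(x,y)}K_z$. *)

theory Defs
  imports "HOL-Analysis.Analysis"
begin

definition downset :: "'a::order \<Rightarrow> 'a set" where
  "downset x = {y. y \<le> x}"

definition order_tau :: "'a::order topology" where
  "order_tau = topology_generated_by (range downset \<union> range (\<lambda>x. UNIV - downset x))"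

definition dcc :: "'a::order itself \<Rightarrow> bool" where
  "dcc _ \<longleftrightarrow> (\<forall>f :: nat \<Rightarrow> 'a. (\<forall>n. f (Suc n) \<le> f n) \<longrightarrow> (\<exists>N. \<forall>n\<ge>N. f n = f N))"

end

theory Submission
  imports Defs
begin

abbreviation "SB \<equiv> (range downset \<union> range (\<lambda>x. UNIV - downset x)) :: 'a::order set set"

lemma topspace_tau: "topspace (order_tau :: 'a::order topology) = UNIV"
  unfolding order_tau_def topology_generated_by_topspace
  by (auto simp: downset_def)

lemma open_down: "openin order_tau (downset x)"
  unfolding order_tau_def by (rule topology_generated_by_Basis) auto

lemma open_cdown: "openin order_tau (UNIV - downset x)"
  unfolding order_tau_def by (rule topology_generated_by_Basis) auto

lemma cpt_idx:
  assumes "compact_space (order_tau :: 'a::order topology)"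
    and "\<forall>i\<in>I. openin order_tau (U i :: 'a set)" and "UNIV \<subseteq> (\<Union>i\<in>I. U i)"
  shows "\<exists>J\<subseteq>I. finite J \<and> UNIV \<subseteq> (\<Union>i\<in>J. U i)"
proof -
  from assms(1)[unfolded compact_space_alt topspace_tau, rule_format, of "U ` I"] assms(2,3)
  obtain \<F> where "finite \<F>" "\<F> \<subseteq> U ` I" "UNIV \<subseteq> \<Union>\<F>" by blast
  then obtain J where "J \<subseteq> I" "finite J" "\<F> = U ` J" by (meson finite_subset_image)
  then show ?thesis using \<open>UNIV \<subseteq> \<Union>\<F>\<close> by auto
qed

lemma UNSB: "\<Union>SB = (UNIV :: 'a::order set)"
  by (auto simp: downset_def)

lemma tau_eq:
  "topology (arbitrary union_of (finite intersection_of (\<lambda>x. x \<in> SB) relative_to \<Union>SB))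
   = (order_tau :: 'a::order topology)"
proof (subst topology_eq, intro allI iffI)
  fix S :: "'a set"
  assume a: "openin (topology (arbitrary union_of (finite intersection_of (\<lambda>x. x \<in> SB) relative_to \<Union>SB))) S"
  have b: "\<And>T. T \<in> SB \<Longrightarrow> openin order_tau T"
    using open_down open_cdown by blast
  have c: "openin order_tau (\<Union>SB)"
    unfolding UNSB by (subst topspace_tau[symmetric]) (rule openin_topspace)
  show "openin order_tau S"
    by (rule minimal_topology_subbase[OF b c a])
next
  fix S :: "'a set"
  assume "openin order_tau S"
  then have "generate_topology_on SB S"
    unfolding order_tau_def by (rule openin_topology_generated_by)
  moreover have "(arbitrary union_of (finite intersection_of (\<lambda>x. x \<in> SB) relative_to \<Union>SB)) T"
    if "T \<in> SB" for T
    using that apply (intro arbitrary_union_of_inc relative_to_subset_inc) by (auto intro: finite_intersection_of_inc)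
  ultimately show "openin (topology (arbitrary union_of (finite intersection_of (\<lambda>x. x \<in> SB) relative_to \<Union>SB))) S"
    unfolding openin_subbase
    by (rule generate_topology_on_coarsest[OF istopology_subbase, rotated])
qed


lemma dcc_wf:
  assumes "dcc TYPE('a::order)"
  shows "wf {(x, y :: 'a). x < y}"
proof (rule ccontr)
  assume "\<not> wf {(x, y :: 'a). x < y}"
  then have "\<exists>f. \<forall>i. (f (Suc i), f i) \<in> {(x, y :: 'a). x < y}"
    by (simp only: wf_iff_no_infinite_down_chain not_not)
  then obtain f :: "nat \<Rightarrow> 'a" where f: "\<And>i. f (Suc i) < f i"
    by blast
  then have "\<And>n. f (Suc n) \<le> f n" by (simp add: less_imp_le)
  then have "\<exists>N. \<forall>n\<ge>N. f n = f N"
    by (rule assms[unfolded dcc_def, rule_format, of f])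
  then obtain N where "\<forall>n\<ge>N. f n = f N" by (elim exE)
  then have "f (Suc N) = f N" by (rule allE[of _ "Suc N"]) simp
  with f[of N] show False by simp
qed

lemma fwd_fin:
  assumes "compact_space (order_tau :: 'a::order topology)"
  shows "\<exists>F :: 'a set. finite F \<and> UNIV = (\<Union>x\<in>F. downset x)"
proof -
  have "\<exists>J\<subseteq>UNIV. finite J \<and> UNIV \<subseteq> (\<Union>i\<in>J. downset (i::'a))"
    apply (rule cpt_idx[OF assms]) using open_down apply blast by (auto simp: downset_def)
  then obtain J where "finite J" "UNIV \<subseteq> (\<Union>i\<in>J. downset (i::'a))" by blast
  then show ?thesis by (intro exI[of _ J]) auto
qed

lemma fwd_int:
  assumes "compact_space (order_tau :: 'a::order topology)"
  shows "\<exists>F. finite F \<and> downset x \<inter> downset y = (\<Union>z\<in>F. downset (z::'a))"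
proof -
  define I :: "(bool + 'a) set" where "I = range Inl \<union> Inr ` (downset x \<inter> downset y)"
  define U where "U i = (case i of Inl b \<Rightarrow> UNIV - downset (if b then x else y) | Inr z \<Rightarrow> downset z)" for i
  have "\<exists>J\<subseteq>I. finite J \<and> UNIV \<subseteq> (\<Union>i\<in>J. U i)"
  proof (rule cpt_idx[OF assms])
    show "\<forall>i\<in>I. openin order_tau (U i)"
      by (auto simp: U_def I_def open_down open_cdown)
    show "UNIV \<subseteq> (\<Union>i\<in>I. U i)"
    proof
      fix p :: 'a
      show "p \<in> (\<Union>i\<in>I. U i)"
      proof (cases "p \<in> downset x \<inter> downset y")
        case True
        then show ?thesis
          by (auto simp: I_def U_def downset_def intro!: bexI[of _ "Inr p"])
      next
        case False
        then show ?thesis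
          by (cases "p \<in> downset x") (auto simp: I_def U_def intro!: bexI[of _ "Inl True"] bexI[of _ "Inl False"])
      qed
    qed
  qed
  then obtain J where J: "J \<subseteq> I" "finite J" "UNIV \<subseteq> (\<Union>i\<in>J. U i)" by blast
  define F where "F = projr ` (J \<inter> range Inr)"
  have "finite F" using J(2) by (simp add: F_def)
  moreover have "downset x \<inter> downset y = (\<Union>z\<in>F. downset z)"
  proof
    show "downset x \<inter> downset y \<subseteq> (\<Union>z\<in>F. downset z)"
    proof
      fix p assume p: "p \<in> downset x \<inter> downset y"
      from J(3) obtain i where i: "i \<in> J" "p \<in> U i" by blast
      show "p \<in> (\<Union>z\<in>F. downset z)"
      proof (cases i)
        case (Inl b)
        then show ?thesis using i p by (auto simp: U_def split: if_splits)
      next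
        case (Inr z)
        then show ?thesis using i unfolding F_def U_def by force
      qed
    qed
    show "(\<Union>z\<in>F. downset z) \<subseteq> downset x \<inter> downset y"
      using J(1) by (auto simp: F_def I_def downset_def intro: order_trans)
  qed
  ultimately show ?thesis by blast
qed

lemma fwd_dcc:
  assumes "compact_space (order_tau :: 'a::order topology)"
  shows "dcc TYPE('a)"
  unfolding dcc_def
proof (intro allI impI)
  fix f :: "nat \<Rightarrow> 'a"
  assume dec: "\<forall>n. f (Suc n) \<le> f n"
  have mono: "f n \<le> f m" if "m \<le> n" for m n
    using that proof (induction n rule: dec_induct)
    case (step n) then show ?case using dec order_trans by blast
  qed simp
  define L where "L = {y. \<forall>n. y \<le> f n}"
  define I :: "(nat + 'a) set" where "I = range Inl \<union> Inr ` L"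
  define U where "U i = (case i of Inl n \<Rightarrow> UNIV - downset (f n) | Inr y \<Rightarrow> downset y)" for i
  have "\<exists>J\<subseteq>I. finite J \<and> UNIV \<subseteq> (\<Union>i\<in>J. U i)"
  proof (rule cpt_idx[OF assms])
    show "\<forall>i\<in>I. openin order_tau (U i)"
      by (auto simp: U_def I_def open_down open_cdown)
    show "UNIV \<subseteq> (\<Union>i\<in>I. U i)"
    proof
      fix p :: 'a
      show "p \<in> (\<Union>i\<in>I. U i)"
      proof (cases "p \<in> L")
        case True
        then show ?thesis by (auto simp: I_def U_def downset_def intro!: bexI[of _ "Inr p"])
      next
        case False
        then obtain n where "\<not> p \<le> f n" by (auto simp: L_def)
        then show ?thesis by (auto simp: I_def U_def downset_def intro!: bexI[of _ "Inl n"])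
      qed
    qed
  qed
  then obtain J where J: "J \<subseteq> I" "finite J" "UNIV \<subseteq> (\<Union>i\<in>J. U i)" by blast
  have "finite (projl ` (J \<inter> range Inl))" using J(2) by simp
  then obtain N where N: "\<And>k. k \<in> projl ` (J \<inter> range Inl) \<Longrightarrow> k \<le> N"
    by (meson finite_nat_set_iff_bounded_le)
  from J(3) obtain i where i: "i \<in> J" "f N \<in> U i" by blast
  show "\<exists>N. \<forall>n\<ge>N. f n = f N"
  proof (cases i)
    case (Inl k)
    then have "k \<le> N" using N i(1) by force
    then have "f N \<le> f k" by (rule mono)
    then show ?thesis using i Inl by (auto simp: U_def downset_def)
  next
    case (Inr y)
    with i J(1) have "y \<in> L" "f N \<le> y" by (auto simp: I_def U_def downset_def)
    then have "\<forall>m. f N \<le> f m" by (auto simp: L_def intro: order_trans)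
    then show ?thesis using mono by (metis order_antisym)
  qed
qed


lemma bwd:
  fixes C :: "'a::order set set"
  assumes wf: "wf {(x, y :: 'a). x < y}"
    and fin: "\<exists>F :: 'a set. finite F \<and> UNIV = (\<Union>x\<in>F. downset x)"
    and int: "\<forall>x y :: 'a. \<exists>F. finite F \<and> downset x \<inter> downset y = (\<Union>z\<in>F. downset z)"
    and C: "C \<subseteq> SB" "\<Union>C = UNIV"
  shows "\<exists>C'. finite C' \<and> C' \<subseteq> C \<and> \<Union>C' = UNIV"
proof -
  define A where "A = {a. downset a \<in> C}"
  define B where "B = {b. UNIV - downset b \<in> C}"
  define ok where "ok z BA \<longleftrightarrow> finite (fst BA) \<and> fst BA \<subseteq> B \<and> finite (snd BA) \<and> snd BA \<subseteq> A \<and>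
      downset z \<inter> \<Inter>(downset ` fst BA) \<subseteq> \<Union>(downset ` snd BA)" for z and BA :: "'a set \<times> 'a set"
  have allgood: "\<exists>BA. ok z BA" for z
    using wf
  proof (induction z rule: wf_induct_rule)
    case (less z)
    have "z \<in> \<Union>C" using C(2) by simp
    then obtain c where c: "c \<in> C" "z \<in> c" by (rule UnionE)
    with C(1) consider a where "c = downset a" "a \<in> A" | b where "c = UNIV - downset b" "b \<in> B"
      unfolding A_def B_def by blast
    then show ?case
    proof cases
      case (1 a)
      then have "downset z \<subseteq> downset a" using c by (auto simp: downset_def intro: order_trans)
      then have "ok z ({}, {a})" unfolding ok_def using 1 by simp
      then show ?thesis by blast
    next
      case (2 b)
      from int obtain F where F: "finite F" "downset z \<inter> downset b = (\<Union>w\<in>F. downset w)" by blast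
      have lt: "w < z" if "w \<in> F" for w
      proof -
        have "downset w \<subseteq> downset z \<inter> downset b" using that by (simp only: F(2)) blast
        moreover have "w \<in> downset w" by (simp add: downset_def)
        ultimately have "w \<in> downset z \<inter> downset b" by (rule subsetD)
        moreover have "\<not> z \<le> b" using c 2 by (auto simp: downset_def)
        ultimately show ?thesis by (auto simp: downset_def order.order_iff_strict)
      qed
      have "\<forall>w\<in>F. \<exists>BA. ok w BA"
      proof
        fix w assume "w \<in> F"
        then have "(w, z) \<in> {(x, y). x < y}" using lt by simp
        then show "\<exists>BA. ok w BA" by (rule less)
      qed
      from bchoice[OF this] obtain g where g: "\<forall>w\<in>F. ok w (g w)" by (elim exE)
      define B0 where "B0 = insert b (\<Union>w\<in>F. fst (g w))"
      define A0 where "A0 = (\<Union>w\<in>F. snd (g w))"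
      have g': "finite (fst (g w))" "fst (g w) \<subseteq> B" "finite (snd (g w))" "snd (g w) \<subseteq> A"
          "downset w \<inter> \<Inter>(downset ` fst (g w)) \<subseteq> \<Union>(downset ` snd (g w))" if "w \<in> F" for w
        using g that unfolding ok_def by auto
      have "finite B0" unfolding B0_def using F(1) g'(1) by simp
      moreover have "B0 \<subseteq> B" unfolding B0_def using 2(2) g'(2) by blast
      moreover have "finite A0" unfolding A0_def using F(1) g'(3) by simp
      moreover have "A0 \<subseteq> A" unfolding A0_def using g'(4) by blast
      moreover have "downset z \<inter> \<Inter>(downset ` B0) \<subseteq> \<Union>(downset ` A0)"
      proof
        fix p assume p: "p \<in> downset z \<inter> \<Inter>(downset ` B0)"
        then have "p \<in> downset z \<inter> downset b" by (auto simp: B0_def)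
        then have "p \<in> (\<Union>w\<in>F. downset w)" by (simp only: F(2))
        then obtain w where w: "w \<in> F" "p \<in> downset w" by (rule UN_E)
        have "p \<in> \<Inter>(downset ` fst (g w))" using p w(1) by (auto simp: B0_def)
        with g'(5)[OF w(1)] w(2) have "p \<in> \<Union>(downset ` snd (g w))" by blast
        then show "p \<in> \<Union>(downset ` A0)" using w(1) by (auto simp: A0_def)
      qed
      ultimately have "ok z (B0, A0)" unfolding ok_def by simp
      then show ?thesis by blast
    qed
  qed
  from fin obtain F :: "'a set" where F: "finite F" "UNIV = (\<Union>x\<in>F. downset x)" by blast
  have "\<forall>x\<in>F. \<exists>BA. ok x BA" using allgood by blast
  from bchoice[OF this] obtain g where g: "\<forall>w\<in>F. ok w (g w)" by (elim exE)
  have g': "finite (fst (g w))" "fst (g w) \<subseteq> B" "finite (snd (g w))" "snd (g w) \<subseteq> A"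
      "downset w \<inter> \<Inter>(downset ` fst (g w)) \<subseteq> \<Union>(downset ` snd (g w))" if "w \<in> F" for w
    using g that unfolding ok_def by auto
  define B0 where "B0 = (\<Union>w\<in>F. fst (g w))"
  define A0 where "A0 = (\<Union>w\<in>F. snd (g w))"
  define C' where "C' = downset ` A0 \<union> (\<lambda>b. UNIV - downset b) ` B0"
  have fA: "finite A0" unfolding A0_def using F(1) g'(3) by simp
  have fB: "finite B0" unfolding B0_def using F(1) g'(1) by simp
  have sA: "A0 \<subseteq> A" unfolding A0_def using g'(4) by blast
  have sB: "B0 \<subseteq> B" unfolding B0_def using g'(2) by blast
  have "finite C'" unfolding C'_def using fA fB by simp
  moreover have "C' \<subseteq> C" unfolding C'_def using sA sB unfolding A_def B_def by blast
  moreover have "\<Union>C' = UNIV"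
  proof -
    have "p \<in> \<Union>C'" for p
    proof (cases "\<exists>b\<in>B0. p \<notin> downset b")
      case True
      then show ?thesis unfolding C'_def by blast
    next
      case False
      have "p \<in> (\<Union>x\<in>F. downset x)" by (simp add: F(2)[symmetric])
      then obtain w where w: "w \<in> F" "p \<in> downset w" by (rule UN_E)
      have "p \<in> \<Inter>(downset ` fst (g w))" using False w(1) by (auto simp: B0_def)
      with g'(5)[OF w(1)] w(2) have "p \<in> \<Union>(downset ` snd (g w))" by blast
      then show ?thesis using w(1) by (auto simp: A0_def C'_def)
    qed
    then show ?thesis by auto
  qed
  ultimately show ?thesis by (intro exI[of _ C'] conjI)
qed

theorem proposition3p12:
  "compact_space (order_tau :: 'a::order topology) \<longleftrightarrow>
     (dcc TYPE('a) \<and>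
      (\<exists>F :: 'a set. finite F \<and> UNIV = (\<Union>x\<in>F. downset x)) \<and>
      (\<forall>x y :: 'a. \<exists>F. finite F \<and> downset x \<inter> downset y = (\<Union>z\<in>F. downset z)))"
proof
  assume "compact_space (order_tau :: 'a::order topology)"
  then show "dcc TYPE('a) \<and>
      (\<exists>F :: 'a set. finite F \<and> UNIV = (\<Union>x\<in>F. downset x)) \<and>
      (\<forall>x y :: 'a. \<exists>F. finite F \<and> downset x \<inter> downset y = (\<Union>z\<in>F. downset z))"
    using fwd_dcc fwd_fin fwd_int by blast
next
  assume h: "dcc TYPE('a) \<and>
      (\<exists>F :: 'a set. finite F \<and> UNIV = (\<Union>x\<in>F. downset x)) \<and>
      (\<forall>x y :: 'a. \<exists>F. finite F \<and> downset x \<inter> downset y = (\<Union>z\<in>F. downset z))"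
  show "compact_space (order_tau :: 'a::order topology)"
  proof (rule Alexander_subbase[OF tau_eq])
    fix C :: "'a set set"
    assume "C \<subseteq> SB" "\<Union>C = topspace order_tau"
    then show "\<exists>C'. finite C' \<and> C' \<subseteq> C \<and> \<Union>C' = topspace order_tau"
      unfolding topspace_tau by (intro bwd[OF dcc_wf]) (use h in auto)
  qed
qed

end
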